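(* Let $\mathcal{A}=(Q,\delta,s)$ be an NFA satisfying the standing assumptions below, and run the Ordered Partition Refinement algorithm described below on $\mathcal{A}$. At the beginning of every iteration of its while loop, every part of the ordered partition $\mathcal{P}$ is forward-stable with respect to every part of $\mathcal{X}$.
   Context: $\Sigma=\{a_1<\dots<a_k\}$ is a finite totally ordered alphabet. NFA $\mathcal{A}=(Q,\delta,s)$, $\delta:Q\times\Sigma\to2^Q$, $\delta_a(u)=\delta(u,a)$, $\delta_a(T)=\bigcup_{u\in T}\delta_a(u)$. Standing assumptions: $s$ has no incoming transitions, every state is reachable from $s$, every $v\neq s$ has incoming transitions labeled by exactly one letter $\lambda(v)$, and every letter labels some transition. A set $S\subseteq Q$ is forward-stable with respect to $T\subseteq Q$ if for every $a\in\Sigma$, $S\subseteq\delta_a(T)$ or $S\cap\delta_a(T)=\emptyset$. Algorithm (Ordered Partition Refinement): let $Q_\epsilon=\{s\}$ and $Q_a=\{v:\lambda(v)=a\}$. Initialize the ordered partitions $\mathcal{P}:=\langle Q_\epsilon,Q_{a_1},\dots,Q_{a_k}\rangle$ and $\mathcal{X}:=\langle Q\rangle$. While $\mathcal{X}\neq\mathcal{P}$: let $S$ be the first part of $\mathcal{X}$ that is a union of at least two parts of $\mathcal{P}$; let $B$ be the smaller (in cardinality) of the first and the last part of $\mathcal{P}$ contained in $S$; replace $S$ in $\mathcal{X}$ by $B,S\setminus B$ if $B$ was the first such part, otherwise by $S\setminus B,B$. Then for each part $D$ of $\mathcal{P}$ (those present before this splitting step), with $a=\lambda(D)$ (the common label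 of its states; for the part $\{s\}$ take $D_1=\emptyset$): $D_1:=D\cap\delta_a(B)$, $D_2:=D\setminus D_1$, $D_{11}:=D_1\cap\delta_a(S\setminus B)$, $D_{12}:=D_1\setminus D_{11}$; replace $D$ in $\mathcal{P}$ by the nonempty sets among $D_{12},D_{11},D_2$ in this order if $B$ was the first part, and among $D_2,D_{11},D_{12}$ in this order otherwise. Return $\mathcal{P}$. *)

theory Defs
  imports Main
begin

definition dimg :: "('q \<Rightarrow> 'a \<Rightarrow> 'q set) \<Rightarrow> 'a \<Rightarrow> 'q set \<Rightarrow> 'q set" where
  "dimg delta a T = (\<Union>u\<in>T. delta u a)"

definition nfa_edges :: "'q set \<Rightarrow> 'a set \<Rightarrow> ('q \<Rightarrow> 'a \<Rightarrow> 'q set) \<Rightarrow> ('q \<times> 'q) set" where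
  "nfa_edges Q Sig delta = {(u, v). u \<in> Q \<and> (\<exists>a\<in>Sig. v \<in> delta u a)}"

definition standing :: "'q set \<Rightarrow> 'a set \<Rightarrow> ('q \<Rightarrow> 'a \<Rightarrow> 'q set) \<Rightarrow> 'q \<Rightarrow> bool" where
  "standing Q Sig delta s \<longleftrightarrow>
     finite Q \<and> finite Sig \<and> s \<in> Q \<and>
     (\<forall>u\<in>Q. \<forall>a\<in>Sig. delta u a \<subseteq> Q) \<and>
     (\<forall>u\<in>Q. \<forall>a\<in>Sig. s \<notin> delta u a) \<and>
     (\<forall>v\<in>Q. (s, v) \<in> (nfa_edges Q Sig delta)\<^sup>*) \<and>
     (\<forall>v\<in>Q. v \<noteq> s \<longrightarrow> (\<exists>!a. a \<in> Sig \<and> (\<exists>u\<in>Q. v \<in> delta u a))) \<and>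
     (\<forall>a\<in>Sig. \<exists>u\<in>Q. delta u a \<noteq> {})"

definition lab :: "'q set \<Rightarrow> 'a set \<Rightarrow> ('q \<Rightarrow> 'a \<Rightarrow> 'q set) \<Rightarrow> 'q \<Rightarrow> 'a" where
  "lab Q Sig delta v = (THE a. a \<in> Sig \<and> (\<exists>u\<in>Q. v \<in> delta u a))"

definition forward_stable :: "'a set \<Rightarrow> ('q \<Rightarrow> 'a \<Rightarrow> 'q set) \<Rightarrow> 'q set \<Rightarrow> 'q set \<Rightarrow> bool" where
  "forward_stable Sig delta S T \<longleftrightarrow>
     (\<forall>a\<in>Sig. S \<subseteq> dimg delta a T \<or> S \<inter> dimg delta a T = {})"

definition opr_init :: "'q set \<Rightarrow> 'a::linorder set \<Rightarrow> ('q \<Rightarrow> 'a \<Rightarrow> 'q set) \<Rightarrow> 'q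
    \<Rightarrow> 'q set list \<times> 'q set list" where
  "opr_init Q Sig delta s =
     ([{s}] @ map (\<lambda>a. {v\<in>Q. v \<noteq> s \<and> lab Q Sig delta v = a}) (sorted_list_of_set Sig),
      [Q])"

definition union_ge2 :: "'q set list \<Rightarrow> 'q set \<Rightarrow> bool" where
  "union_ge2 P S \<longleftrightarrow> (\<exists>T. T \<subseteq> set P \<and> 2 \<le> card T \<and> \<Union>T = S)"

definition refine_part :: "'q set \<Rightarrow> 'a set \<Rightarrow> ('q \<Rightarrow> 'a \<Rightarrow> 'q set) \<Rightarrow> 'q
    \<Rightarrow> bool \<Rightarrow> 'q set \<Rightarrow> 'q set \<Rightarrow> 'q set \<Rightarrow> 'q set list" where
  "refine_part Q Sig delta s isfirst B S D =
     (let a = lab Q Sig delta (SOME v. v \<in> D);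
          D1 = (if D = {s} then {} else D \<inter> dimg delta a B);
          D2 = D - D1;
          D11 = D1 \<inter> dimg delta a (S - B);
          D12 = D1 - D11
      in filter (\<lambda>E. E \<noteq> {}) (if isfirst then [D12, D11, D2] else [D2, D11, D12]))"

text \<open>One iteration of the while loop (body), applied when X differs from P.
  Ties in the choice of B are broken in favour of the first part.\<close>
definition opr_step :: "'q set \<Rightarrow> 'a set \<Rightarrow> ('q \<Rightarrow> 'a \<Rightarrow> 'q set) \<Rightarrow> 'q
    \<Rightarrow> 'q set list \<times> 'q set list \<Rightarrow> 'q set list \<times> 'q set list" where
  "opr_step Q Sig delta s PX =
     (let P = fst PX; X = snd PX in
      case find (union_ge2 P) X of
        None \<Rightarrow> (P, X)
      | Some S \<Rightarrow>
          (let Fst = hd (filter (\<lambda>D. D \<subseteq> S) P);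
               Lst = last (filter (\<lambda>D. D \<subseteq> S) P);
               isfirst = (card Fst \<le> card Lst);
               B = (if isfirst then Fst else Lst);
               X' = concat (map (\<lambda>T. if T = S then (if isfirst then [B, S - B] else [S - B, B])
                                     else [T]) X);
               P' = concat (map (refine_part Q Sig delta s isfirst B S) P)
           in (P', X')))"

text \<open>State at the beginning of iteration n (if the loop has not stopped before).\<close>
definition opr_state :: "'q set \<Rightarrow> 'a::linorder set \<Rightarrow> ('q \<Rightarrow> 'a \<Rightarrow> 'q set) \<Rightarrow> 'q
    \<Rightarrow> nat \<Rightarrow> 'q set list \<times> 'q set list" where
  "opr_state Q Sig delta s n = (opr_step Q Sig delta s ^^ n) (opr_init Q Sig delta s)"

end

theory Submission
  imports Defs
begin

lemma lab_eq:
  assumes st: "standing Q Sig delta s" and u: "u \<in> Q" and c: "c \<in> Sig" and v: "v \<in> delta u c"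
  shows "lab Q Sig delta v = c \<and> v \<noteq> s \<and> v \<in> Q"
proof -
  have vQ: "v \<in> Q" using st u c v unfolding standing_def by blast
  have vs: "v \<noteq> s" using st u c v unfolding standing_def by blast
  have ex: "\<exists>!a. a \<in> Sig \<and> (\<exists>u\<in>Q. v \<in> delta u a)" using st vQ vs unfolding standing_def by blast
  have "lab Q Sig delta v = c" unfolding lab_def
    by (rule the1_equality[OF ex]) (use u c v in blast)
  thus ?thesis using vQ vs by blast
qed

lemma dimg_lab:
  assumes st: "standing Q Sig delta s" and T: "T \<subseteq> Q" and c: "c \<in> Sig" and v: "v \<in> dimg delta c T"
  shows "lab Q Sig delta v = c \<and> v \<noteq> s \<and> v \<in> Q"
  using v T lab_eq[OF st _ c] unfolding dimg_def by blast

definition inv where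
  "inv Q Sig delta s P X \<longleftrightarrow>
     (\<forall>D\<in>set P. D \<noteq> {} \<and> D \<subseteq> Q \<and> (D = {s} \<or> (s \<notin> D \<and> (\<forall>v\<in>D. \<forall>w\<in>D. lab Q Sig delta v = lab Q Sig delta w)))) \<and>
     (\<forall>T\<in>set X. T \<subseteq> Q) \<and>
     (\<forall>D\<in>set P. \<forall>T\<in>set X. forward_stable Sig delta D T)"

lemma stable_mono: "forward_stable Sig delta D T \<Longrightarrow> E \<subseteq> D \<Longrightarrow> forward_stable Sig delta E T"
  unfolding forward_stable_def by blast

lemma init_inv:
  assumes st: "standing Q Sig delta s"
  shows "inv Q Sig delta s (fst (opr_init Q Sig delta s)) (snd (opr_init Q Sig delta s))"
proof -
  have fin: "finite Sig" using st unfolding standing_def by blast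
  have sQ: "s \<in> Q" using st unfolding standing_def by blast
  have ne: "{v\<in>Q. v \<noteq> s \<and> lab Q Sig delta v = a} \<noteq> {}" if a: "a \<in> Sig" for a
  proof -
    obtain u where u: "u \<in> Q" "delta u a \<noteq> {}" using st a unfolding standing_def by blast
    then obtain v where "v \<in> delta u a" by blast
    thus ?thesis using lab_eq[OF st u(1) a] by blast
  qed
  have stab: "forward_stable Sig delta D Q" if D: "D \<in> set (fst (opr_init Q Sig delta s))" for D
  proof -
    { assume "D = {s}"
      hence ?thesis unfolding forward_stable_def using dimg_lab[OF st] by blast }
    moreover
    { fix a assume a: "a \<in> Sig" and Dd: "D = {v\<in>Q. v \<noteq> s \<and> lab Q Sig delta v = a}"
      have ?thesis unfolding forward_stable_def
      proof
        fix c assume c: "c \<in> Sig"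
        show "D \<subseteq> dimg delta c Q \<or> D \<inter> dimg delta c Q = {}"
        proof (cases "c = a")
          case True
          have "D \<subseteq> dimg delta c Q"
          proof
            fix v assume v: "v \<in> D"
            hence "v \<in> Q" "v \<noteq> s" using Dd by auto
            then obtain b u where bu: "b \<in> Sig" "u \<in> Q" "v \<in> delta u b"
              using st unfolding standing_def by blast
            moreover have "b = a" using lab_eq[OF st bu(2) bu(1) bu(3)] v Dd by auto
            ultimately show "v \<in> dimg delta c Q" unfolding dimg_def using True by blast
          qed
          thus ?thesis ..
        next
          case False
          thus ?thesis using dimg_lab[OF st _ c] Dd by blast
        qed
      qed }
    ultimately show ?thesis using D fin unfolding opr_init_def by auto
  qed
  show ?thesis unfolding inv_def
    using ne fin sQ stab by (auto simp: opr_init_def)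
qed

lemma refine_ok:
  assumes st: "standing Q Sig delta s"
    and D: "D \<noteq> {}" "D \<subseteq> Q" "D = {s} \<or> (s \<notin> D \<and> (\<forall>v\<in>D. \<forall>w\<in>D. lab Q Sig delta v = lab Q Sig delta w))"
    and DS: "forward_stable Sig delta D S"
    and BQ: "B \<subseteq> Q" and SQ: "S \<subseteq> Q"
    and E: "E \<in> set (refine_part Q Sig delta s isf B S D)"
  shows "E \<noteq> {} \<and> E \<subseteq> D \<and> (D = {s} \<longrightarrow> E = {s}) \<and>
         forward_stable Sig delta E B \<and> forward_stable Sig delta E (S - B)"
proof -
  define a where "a = lab Q Sig delta (SOME v. v \<in> D)"
  define D1 where "D1 = (if D = {s} then {} else D \<inter> dimg delta a B)"
  define D2 where "D2 = D - D1"
  define D11 where "D11 = D1 \<inter> dimg delta a (S - B)"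
  define D12 where "D12 = D1 - D11"
  have rp: "refine_part Q Sig delta s isf B S D = filter (\<lambda>E. E \<noteq> {}) (if isf then [D12, D11, D2] else [D2, D11, D12])"
    unfolding refine_part_def Let_def D12_def D11_def D2_def D1_def a_def by simp
  have Ene: "E \<noteq> {}" using E unfolding rp by simp
  have "set (if isf then [D12, D11, D2] else [D2, D11, D12]) = {D12, D11, D2}" by auto
  hence E3: "E \<in> {D12, D11, D2}" using E unfolding rp set_filter by blast
  have SBQ: "S - B \<subseteq> Q" using SQ by blast
  show ?thesis
  proof (cases "D = {s}")
    case True
    hence "D12 = {}" "D11 = {}" "D2 = {s}" unfolding D12_def D11_def D2_def D1_def by simp_all
    hence Es: "E = {s}" using E3 Ene by blast
    have fs: "forward_stable Sig delta {s} T" if "T \<subseteq> Q" for T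
      unfolding forward_stable_def using dimg_lab[OF st that] by blast
    have h1: "E \<subseteq> D" using Es True by simp
    have h2: "forward_stable Sig delta E B" using fs[OF BQ] Es by simp
    have h3: "forward_stable Sig delta E (S - B)" using fs[OF SBQ] Es by simp
    show ?thesis using h1 h2 h3 Ene Es by (intro conjI impI)
  next
    case False
    hence same: "\<forall>v\<in>D. \<forall>w\<in>D. lab Q Sig delta v = lab Q Sig delta w" using D False by blast
    have "(SOME v. v \<in> D) \<in> D" using D(1) by (simp add: some_in_eq)
    hence labD: "\<forall>v\<in>D. lab Q Sig delta v = a" using same unfolding a_def by blast
    have D1d: "D1 = D \<inter> dimg delta a B" using False unfolding D1_def by simp
    have subs: "D12 \<subseteq> D" "D11 \<subseteq> D" "D2 \<subseteq> D" unfolding D12_def D11_def D2_def D1d by blast+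
    have ED: "E \<subseteq> D" using E3 subs by blast
    have other: "E \<inter> dimg delta c T = {}" if "c \<in> Sig" "c \<noteq> a" "T \<subseteq> Q" for c T
      using dimg_lab[OF st that(3) that(1)] labD ED that(2) by blast
    have aS: "a \<in> Sig \<Longrightarrow> D \<subseteq> dimg delta a S \<or> D \<inter> dimg delta a S = {}"
      using DS unfolding forward_stable_def by blast
    have dimgS: "dimg delta a S \<subseteq> dimg delta a B \<union> dimg delta a (S - B)"
      unfolding dimg_def by blast
    have dimgS2: "dimg delta a (S - B) \<subseteq> dimg delta a S" unfolding dimg_def by blast
    have sB: "forward_stable Sig delta E B"
      unfolding forward_stable_def
    proof
      fix c assume c: "c \<in> Sig"
      show "E \<subseteq> dimg delta c B \<or> E \<inter> dimg delta c B = {}"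
      proof (cases "c = a")
        case True
        have "D12 \<subseteq> dimg delta a B" "D11 \<subseteq> dimg delta a B" "D2 \<inter> dimg delta a B = {}"
          unfolding D12_def D11_def D2_def D1d by blast+
        thus ?thesis using E3 True by blast
      next
        case False thus ?thesis using other[OF c False BQ] by blast
      qed
    qed
    have sSB: "forward_stable Sig delta E (S - B)"
      unfolding forward_stable_def
    proof
      fix c assume c: "c \<in> Sig"
      show "E \<subseteq> dimg delta c (S - B) \<or> E \<inter> dimg delta c (S - B) = {}"
      proof (cases "c = a")
        case True
        have 1: "D12 \<inter> dimg delta a (S - B) = {}" "D11 \<subseteq> dimg delta a (S - B)"
          unfolding D12_def D11_def by blast+
        have 2: "D2 \<subseteq> dimg delta a (S - B) \<or> D2 \<inter> dimg delta a (S - B) = {}"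
        proof (cases "D \<subseteq> dimg delta a S")
          case True
          hence "D2 \<subseteq> dimg delta a (S - B)" using dimgS unfolding D2_def D1d by blast
          thus ?thesis ..
        next
          case False
          hence "D \<inter> dimg delta a S = {}" using aS c \<open>c = a\<close> by blast
          hence "D2 \<inter> dimg delta a (S - B) = {}" using dimgS2 unfolding D2_def by blast
          thus ?thesis ..
        qed
        show ?thesis using E3 1 2 True by blast
      next
        case False thus ?thesis using other[OF c False SBQ] by blast
      qed
    qed
    show ?thesis using Ene ED sB sSB False by blast
  qed
qed

lemma find_SomeD': "find p xs = Some x \<Longrightarrow> x \<in> set xs \<and> p x"
  by (auto simp add: find_Some_iff)

lemma step_inv:
  assumes st: "standing Q Sig delta s" and I: "inv Q Sig delta s P X"
  shows "inv Q Sig delta s (fst (opr_step Q Sig delta s (P, X))) (snd (opr_step Q Sig delta s (P, X)))"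
proof (cases "find (union_ge2 P) X")
  case None
  thus ?thesis using I unfolding opr_step_def by simp
next
  case (Some S)
  have SX: "S \<in> set X" and U: "union_ge2 P S" using find_SomeD'[OF Some] by auto
  obtain T where T: "T \<subseteq> set P" "2 \<le> card T" "\<Union>T = S" using U unfolding union_ge2_def by blast
  have "T \<noteq> {}" using T(2) by auto
  then obtain D0 where "D0 \<in> T" by blast
  hence "D0 \<in> set (filter (\<lambda>D. D \<subseteq> S) P)" using T by auto
  hence fne: "filter (\<lambda>D. D \<subseteq> S) P \<noteq> []" by (metis empty_iff set_empty)
  define Fst where "Fst = hd (filter (\<lambda>D. D \<subseteq> S) P)"
  define Lst where "Lst = last (filter (\<lambda>D. D \<subseteq> S) P)"
  define isf where "isf = (card Fst \<le> card Lst)"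
  define B where "B = (if isf then Fst else Lst)"
  have "Fst \<in> set (filter (\<lambda>D. D \<subseteq> S) P)" unfolding Fst_def using fne by (rule hd_in_set)
  moreover have "Lst \<in> set (filter (\<lambda>D. D \<subseteq> S) P)" unfolding Lst_def using fne by (rule last_in_set)
  ultimately have BP: "B \<in> set P" unfolding B_def by auto
  have SQ: "S \<subseteq> Q" using I SX unfolding inv_def by blast
  have BQ: "B \<subseteq> Q" using I BP unfolding inv_def by blast
  define X' where "X' = concat (map (\<lambda>T. if T = S then (if isf then [B, S - B] else [S - B, B]) else [T]) X)"
  define P' where "P' = concat (map (refine_part Q Sig delta s isf B S) P)"
  have step: "opr_step Q Sig delta s (P, X) = (P', X')"
    unfolding opr_step_def Let_def X'_def P'_def B_def isf_def Fst_def Lst_def fst_conv snd_conv using Some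
    by simp
  have X'set: "T' \<in> set X \<or> T' = B \<or> T' = S - B" if "T' \<in> set X'" for T'
    using that unfolding X'_def by (auto split: if_splits)
  have P'set: "\<exists>D\<in>set P. E \<in> set (refine_part Q Sig delta s isf B S D)" if "E \<in> set P'" for E
    using that unfolding P'_def by auto
  have main: "E \<noteq> {} \<and> E \<subseteq> Q \<and> (E = {s} \<or> (s \<notin> E \<and> (\<forall>v\<in>E. \<forall>w\<in>E. lab Q Sig delta v = lab Q Sig delta w)))
      \<and> (\<forall>T'\<in>set X'. forward_stable Sig delta E T')" if E: "E \<in> set P'" for E
  proof -
    obtain D where D: "D \<in> set P" "E \<in> set (refine_part Q Sig delta s isf B S D)" using P'set[OF E] by blast
    have Dp: "D \<noteq> {}" "D \<subseteq> Q" "D = {s} \<or> (s \<notin> D \<and> (\<forall>v\<in>D. \<forall>w\<in>D. lab Q Sig delta v = lab Q Sig delta w))"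
      using I D(1) unfolding inv_def by blast+
    have DT: "\<forall>T'\<in>set X. forward_stable Sig delta D T'" using I D(1) unfolding inv_def by blast
    have R: "E \<noteq> {} \<and> E \<subseteq> D \<and> (D = {s} \<longrightarrow> E = {s}) \<and>
         forward_stable Sig delta E B \<and> forward_stable Sig delta E (S - B)"
      by (rule refine_ok[OF st Dp DT[rule_format, OF SX] BQ SQ D(2)])
    have 1: "E \<subseteq> Q" using R Dp(2) by blast
    have 2: "E = {s} \<or> (s \<notin> E \<and> (\<forall>v\<in>E. \<forall>w\<in>E. lab Q Sig delta v = lab Q Sig delta w))"
    proof (cases "D = {s}")
      case True thus ?thesis using R by blast
    next
      case False
      hence "s \<notin> D \<and> (\<forall>v\<in>D. \<forall>w\<in>D. lab Q Sig delta v = lab Q Sig delta w)" using Dp(3) by blast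
      moreover have "E \<subseteq> D" using R by blast
      ultimately show ?thesis by blast
    qed
    have 3: "\<forall>T'\<in>set X'. forward_stable Sig delta E T'"
    proof
      fix T' assume "T' \<in> set X'"
      hence "T' \<in> set X \<or> T' = B \<or> T' = S - B" by (rule X'set)
      moreover have "T' \<in> set X \<Longrightarrow> forward_stable Sig delta E T'"
        using stable_mono[of Sig delta D T' E] DT R by blast
      ultimately show "forward_stable Sig delta E T'" using R by blast
    qed
    show ?thesis using R 1 2 3 by blast
  qed
  have X'Q: "\<forall>T'\<in>set X'. T' \<subseteq> Q"
  proof
    fix T' assume "T' \<in> set X'"
    hence "T' \<in> set X \<or> T' = B \<or> T' = S - B" by (rule X'set)
    thus "T' \<subseteq> Q" using I SQ BQ unfolding inv_def by blast
  qed
  show ?thesis unfolding step inv_def fst_conv snd_conv using main X'Q by blast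
qed

lemma all_inv:
  assumes st: "standing Q Sig delta s"
  shows "inv Q Sig delta s (fst (opr_state Q Sig delta s n)) (snd (opr_state Q Sig delta s n))"
proof (induction n)
  case 0
  thus ?case using init_inv[OF st] unfolding opr_state_def by simp
next
  case (Suc n)
  have "opr_state Q Sig delta s (Suc n) = opr_step Q Sig delta s (opr_state Q Sig delta s n)"
    unfolding opr_state_def by simp
  thus ?case using step_inv[OF st Suc] by simp
qed

theorem lemma10:
  fixes Q :: "'q set" and Sig :: "'a::linorder set"
    and delta :: "'q \<Rightarrow> 'a \<Rightarrow> 'q set" and s :: 'q and n :: nat
  assumes "standing Q Sig delta s"
    and "\<forall>m\<le>n. fst (opr_state Q Sig delta s m) \<noteq> snd (opr_state Q Sig delta s m)"
  shows "\<forall>D\<in>set (fst (opr_state Q Sig delta s n)).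
           \<forall>T\<in>set (snd (opr_state Q Sig delta s n)). forward_stable Sig delta D T"
  using all_inv[OF assms(1), of n] unfolding inv_def by blast

end
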